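(* Let $P$ be a poset such that $\Sigma P$ is an $\omega$ type space. Then $\Sigma\sigma(P)$ is sober.
   Context: For a poset $P$, $\sigma(P)$ is the set of Scott open subsets of $P$ (a set $U$ is Scott open iff it is an upper set and for every directed $D$ whose supremum exists, $\bigvee D\in U$ implies $D\cap U\neq\emptyset$), $\Sigma P=(P,\sigma(P))$, and $\Sigma\sigma(P)$ is the poset $(\sigma(P),\subseteq)$ with its Scott topology. A topological space is an $\omega$ type space if it has a subbase consisting of countable subsets. A $T_0$ space is sober if every irreducible closed set equals $\overline{\{x\}}$ for some point $x$. *)

theory Defs
  imports "HOL-Analysis.Analysis"
begin

definition directed_in :: "'a::order set \<Rightarrow> 'a set \<Rightarrow> bool" where
  "directed_in S D \<longleftrightarrow> D \<noteq> {} \<and> D \<subseteq> S \<and>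
     (\<forall>x\<in>D. \<forall>y\<in>D. \<exists>z\<in>D. x \<le> z \<and> y \<le> z)"

definition is_lub_in :: "'a::order set \<Rightarrow> 'a set \<Rightarrow> 'a \<Rightarrow> bool" where
  "is_lub_in S D s \<longleftrightarrow> s \<in> S \<and> (\<forall>x\<in>D. x \<le> s) \<and>
     (\<forall>u\<in>S. (\<forall>x\<in>D. x \<le> u) \<longrightarrow> s \<le> u)"

definition scott_open_in :: "'a::order set \<Rightarrow> 'a set \<Rightarrow> bool" where
  "scott_open_in S U \<longleftrightarrow> U \<subseteq> S \<and> (\<forall>x\<in>U. \<forall>y\<in>S. x \<le> y \<longrightarrow> y \<in> U) \<and>
     (\<forall>D s. directed_in S D \<and> is_lub_in S D s \<and> s \<in> U \<longrightarrow> D \<inter> U \<noteq> {})"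

definition scott_opens :: "'a::order set \<Rightarrow> 'a set set" where
  "scott_opens S = {U. scott_open_in S U}"

definition scott_topology :: "'a::order set \<Rightarrow> 'a topology" where
  "scott_topology S = topology (scott_open_in S)"

lemma istopology_scott_open_in: "istopology (scott_open_in S)"
  unfolding istopology_def
proof (intro conjI allI impI)
  fix U V assume U: "scott_open_in S U" and V: "scott_open_in S V"
  have 1: "U \<inter> V \<subseteq> S" using U unfolding scott_open_in_def by blast
  have 2: "\<forall>x\<in>U \<inter> V. \<forall>y\<in>S. x \<le> y \<longrightarrow> y \<in> U \<inter> V"
    using U V unfolding scott_open_in_def by blast
  have 3: "D \<inter> (U \<inter> V) \<noteq> {}"
    if h: "directed_in S D" "is_lub_in S D s" "s \<in> U \<inter> V" for D s
  proof -
    obtain x where x: "x \<in> D \<inter> U" using h U unfolding scott_open_in_def by blast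
    obtain y where y: "y \<in> D \<inter> V" using h V unfolding scott_open_in_def by blast
    obtain z where z: "z \<in> D" "x \<le> z" "y \<le> z"
      using h x y unfolding directed_in_def by blast
    have zS: "z \<in> S" using h z unfolding directed_in_def by blast
    have "z \<in> U" using U x z zS unfolding scott_open_in_def by blast
    moreover have "z \<in> V" using V y z zS unfolding scott_open_in_def by blast
    ultimately show ?thesis using z by blast
  qed
  show "scott_open_in S (U \<inter> V)"
    unfolding scott_open_in_def
    apply (rule conjI[OF 1 conjI[OF 2]])
    apply (intro allI impI)
    apply (elim conjE)
    by (rule 3)
next
  fix K assume K: "\<forall>U\<in>K. scott_open_in S U"
  have 1: "\<Union>K \<subseteq> S" using K unfolding scott_open_in_def by blast
  have 2: "\<forall>x\<in>\<Union>K. \<forall>y\<in>S. x \<le> y \<longrightarrow> y \<in> \<Union>K"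
  proof (intro ballI impI)
    fix x y assume "x \<in> \<Union>K" "y \<in> S" "x \<le> y"
    then obtain U where U: "U \<in> K" "x \<in> U" by blast
    then have "scott_open_in S U" using K by blast
    then have "y \<in> U" using U \<open>y \<in> S\<close> \<open>x \<le> y\<close> unfolding scott_open_in_def by blast
    then show "y \<in> \<Union>K" using U by blast
  qed
  have 3: "D \<inter> \<Union>K \<noteq> {}"
    if h: "directed_in S D" "is_lub_in S D s" "s \<in> \<Union>K" for D s
  proof -
    obtain U where U: "U \<in> K" "s \<in> U" using h by blast
    then have "scott_open_in S U" using K by blast
    then have "D \<inter> U \<noteq> {}" using U h unfolding scott_open_in_def by blast
    then show ?thesis using U by blast
  qed
  show "scott_open_in S (\<Union>K)"
    unfolding scott_open_in_def
    apply (rule conjI[OF 1 conjI[OF 2]])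
    apply (intro allI impI)
    apply (elim conjE)
    by (rule 3)
qed

lemma openin_scott_topology: "openin (scott_topology S) U \<longleftrightarrow> scott_open_in S U"
  unfolding scott_topology_def using istopology_scott_open_in topology_inverse' by metis

text \<open>omega type space: has a subbase of countable sets (finite intersections of
  subbase elements, the empty intersection being the whole space, form a base).\<close>
definition omega_type_space :: "'a topology \<Rightarrow> bool" where
  "omega_type_space X \<longleftrightarrow> (\<exists>B. (\<forall>b\<in>B. countable b) \<and>
     (\<forall>U. openin X U \<longleftrightarrow>
        (\<exists>\<U>. U = \<Union>\<U> \<and> (\<forall>V\<in>\<U>. \<exists>F. finite F \<and> F \<subseteq> B \<and> V = topspace X \<inter> \<Inter>F))))"

definition irreducible_in :: "'a topology \<Rightarrow> 'a set \<Rightarrow> bool" where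
  "irreducible_in X C \<longleftrightarrow> C \<noteq> {} \<and> C \<subseteq> topspace X \<and>
     (\<forall>A B. closedin X A \<and> closedin X B \<and> C \<subseteq> A \<union> B \<longrightarrow> C \<subseteq> A \<or> C \<subseteq> B)"

definition sober_space :: "'a topology \<Rightarrow> bool" where
  "sober_space X \<longleftrightarrow> t0_space X \<and>
     (\<forall>C. closedin X C \<and> irreducible_in X C \<longrightarrow> (\<exists>x\<in>topspace X. C = X closure_of {x}))"

end

theory Submission
  imports Defs
begin

lemma topspace_scott: "topspace (scott_topology S) = S"
proof -
  have "scott_open_in S S" unfolding scott_open_in_def directed_in_def by auto
  moreover have "U \<subseteq> S" if "scott_open_in S U" for U
    using that unfolding scott_open_in_def by auto
  ultimately show ?thesis unfolding topspace_def openin_scott_topology by blast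
qed

lemma closedin_scott:
  "closedin (scott_topology S) C \<longleftrightarrow> C \<subseteq> S \<and> scott_open_in S (S - C)"
  by (simp add: closedin_def topspace_scott openin_scott_topology)

lemma scott_open_upper:
  "scott_open_in S U \<Longrightarrow> x \<in> U \<Longrightarrow> y \<in> S \<Longrightarrow> x \<le> y \<Longrightarrow> y \<in> U"
  by (auto simp: scott_open_in_def)

lemma scott_open_sub: "scott_open_in S U \<Longrightarrow> U \<subseteq> S"
  by (auto simp: scott_open_in_def)

lemma scott_open_lub:
  "scott_open_in S U \<Longrightarrow> directed_in S D \<Longrightarrow> is_lub_in S D s \<Longrightarrow> s \<in> U \<Longrightarrow> \<exists>d\<in>D. d \<in> U"
  unfolding scott_open_in_def by blast

lemma closed_down:
  assumes "closedin (scott_topology S) C" "c \<in> C" "y \<in> S" "y \<le> c"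
  shows "y \<in> C"
proof (rule ccontr)
  assume "y \<notin> C"
  have o: "scott_open_in S (S - C)" and CS: "C \<subseteq> S" using assms(1) closedin_scott by auto
  have "c \<in> S - C" using scott_open_upper[OF o, of y c] assms \<open>y \<notin> C\<close> CS by auto
  then show False using assms(2) by auto
qed

lemma closed_lub:
  assumes "closedin (scott_topology S) C" "directed_in S D" "D \<subseteq> C" "is_lub_in S D s"
  shows "s \<in> C"
proof (rule ccontr)
  assume "s \<notin> C"
  have o: "scott_open_in S (S - C)" using assms(1) closedin_scott by auto
  have "s \<in> S" using assms(4) unfolding is_lub_in_def by auto
  then obtain d where "d \<in> D" "d \<in> S - C" using scott_open_lub[OF o assms(2) assms(4)] \<open>s \<notin> C\<close> by blast
  then show False using assms(3) by auto
qed

lemma down_open: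
  assumes "y \<in> S"
  shows "scott_open_in S {z\<in>S. \<not> z \<le> y}"
  unfolding scott_open_in_def
proof (intro conjI allI impI ballI)
  show "{z \<in> S. \<not> z \<le> y} \<subseteq> S" by auto
next
  fix x z assume "x \<in> {z \<in> S. \<not> z \<le> y}" "z \<in> S" "x \<le> z"
  then show "z \<in> {z \<in> S. \<not> z \<le> y}" using order_trans by blast
next
  fix D s assume h: "directed_in S D \<and> is_lub_in S D s \<and> s \<in> {z \<in> S. \<not> z \<le> y}"
  show "D \<inter> {z \<in> S. \<not> z \<le> y} \<noteq> {}"
  proof
    assume e: "D \<inter> {z \<in> S. \<not> z \<le> y} = {}"
    have "D \<subseteq> S" using h unfolding directed_in_def by auto
    then have "\<forall>x\<in>D. x \<le> y" using e by auto
    then have "s \<le> y" using h assms unfolding is_lub_in_def by auto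
    then show False using h by auto
  qed
qed

lemma t0_scott: "t0_space (scott_topology S)"
  unfolding t0_space_def topspace_scott
proof (intro ballI impI)
  fix x y assume xy: "x \<in> S" "y \<in> S" "x \<noteq> y"
  show "\<exists>U. openin (scott_topology S) U \<and> (x \<notin> U) = (y \<in> U)"
  proof (cases "x \<le> y")
    case True
    then have "\<not> y \<le> x" using xy antisym by auto
    then show ?thesis using down_open[OF xy(1)] xy True
      by (intro exI[of _ "{z\<in>S. \<not> z \<le> x}"]) (auto simp: openin_scott_topology)
  next
    case False
    then show ?thesis using down_open[OF xy(2)] xy
      by (intro exI[of _ "{z\<in>S. \<not> z \<le> y}"]) (auto simp: openin_scott_topology)
  qed
qed

lemma closure_scott:
  assumes "x \<in> S"
  shows "scott_topology S closure_of {x} = {z\<in>S. z \<le> x}"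
proof
  show "scott_topology S closure_of {x} \<subseteq> {z \<in> S. z \<le> x}"
  proof
    fix z assume z: "z \<in> scott_topology S closure_of {x}"
    then have zS: "z \<in> S" unfolding closure_of_def topspace_scott by auto
    show "z \<in> {z \<in> S. z \<le> x}"
    proof (rule ccontr)
      assume "z \<notin> {z \<in> S. z \<le> x}"
      then have zin: "z \<in> {w\<in>S. \<not> w \<le> x}" using zS by auto
      have all: "\<forall>T. z \<in> T \<and> scott_open_in S T \<longrightarrow> x \<in> T"
        using z unfolding closure_of_def openin_scott_topology by simp
      have "x \<in> {w\<in>S. \<not> w \<le> x}"
        using all[rule_format, OF conjI[OF zin down_open[OF assms]]] .
      then show False by simp
    qed
  qed
next
  show "{z \<in> S. z \<le> x} \<subseteq> scott_topology S closure_of {x}"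
    unfolding closure_of_def topspace_scott openin_scott_topology
    using scott_open_upper assms by blast
qed

lemma irr_meet:
  assumes "irreducible_in X C" "openin X O1" "openin X O2" "C \<inter> O1 \<noteq> {}" "C \<inter> O2 \<noteq> {}"
  shows "C \<inter> O1 \<inter> O2 \<noteq> {}"
proof
  assume e: "C \<inter> O1 \<inter> O2 = {}"
  have c1: "closedin X (topspace X - O1)" and c2: "closedin X (topspace X - O2)"
    using assms(2,3) by auto
  have "C \<subseteq> topspace X" using assms(1) unfolding irreducible_in_def by auto
  then have "C \<subseteq> (topspace X - O1) \<union> (topspace X - O2)" using e by auto
  then have "C \<subseteq> topspace X - O1 \<or> C \<subseteq> topspace X - O2"
    using assms(1) c1 c2 unfolding irreducible_in_def by blast
  then show False using assms(4,5) by auto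
qed

lemma union_L:
  assumes "D \<subseteq> scott_opens P"
  shows "\<Union>D \<in> scott_opens P"
proof -
  have "openin (scott_topology P) (\<Union>D)"
    using assms by (intro openin_Union) (auto simp: openin_scott_topology scott_opens_def)
  then show ?thesis by (simp add: openin_scott_topology scott_opens_def)
qed

lemma int_L:
  assumes "U \<in> scott_opens P" "V \<in> scott_opens P"
  shows "U \<inter> V \<in> scott_opens P"
proof -
  have "openin (scott_topology P) (U \<inter> V)"
    using assms by (intro openin_Int) (auto simp: openin_scott_topology scott_opens_def)
  then show ?thesis by (simp add: openin_scott_topology scott_opens_def)
qed

lemma lub_L_intro:
  assumes "D \<subseteq> scott_opens P"
  shows "is_lub_in (scott_opens P) D (\<Union>D)"
  using union_L[OF assms] unfolding is_lub_in_def by auto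

lemma lub_L:
  assumes "directed_in (scott_opens P) D" "is_lub_in (scott_opens P) D s"
  shows "s = \<Union>D"
proof -
  have DL: "D \<subseteq> scott_opens P" using assms(1) unfolding directed_in_def by auto
  have "s \<subseteq> \<Union>D" using assms(2) union_L[OF DL] unfolding is_lub_in_def by auto
  moreover have "\<Union>D \<subseteq> s" using assms(2) unfolding is_lub_in_def by auto
  ultimately show ?thesis by auto
qed

lemma phi_open: "scott_open_in (scott_opens P) {U \<in> scott_opens P. x \<in> U}"
  unfolding scott_open_in_def
proof (intro conjI allI impI ballI)
  show "{U \<in> scott_opens P. x \<in> U} \<subseteq> scott_opens P" by auto
next
  fix U V assume "U \<in> {U \<in> scott_opens P. x \<in> U}" "V \<in> scott_opens P" "U \<le> V"
  then show "V \<in> {U \<in> scott_opens P. x \<in> U}" by auto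
next
  fix D s assume h: "directed_in (scott_opens P) D \<and> is_lub_in (scott_opens P) D s \<and>
      s \<in> {U \<in> scott_opens P. x \<in> U}"
  then have "s = \<Union>D" using lub_L by blast
  then show "D \<inter> {U \<in> scott_opens P. x \<in> U} \<noteq> {}"
    using h unfolding directed_in_def by auto
qed

lemma phiF_open:
  assumes "finite F"
  shows "scott_open_in (scott_opens P) {U \<in> scott_opens P. F \<subseteq> U}"
  using assms
proof (induction F)
  case empty
  have "openin (scott_topology (scott_opens P)) (topspace (scott_topology (scott_opens P)))" by simp
  then show ?case by (simp add: topspace_scott openin_scott_topology)
next
  case (insert x F)
  have "openin (scott_topology (scott_opens P))
        ({U \<in> scott_opens P. x \<in> U} \<inter> {U \<in> scott_opens P. F \<subseteq> U})"
    using insert.IH phi_open by (intro openin_Int) (auto simp: openin_scott_topology)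
  moreover have "{U \<in> scott_opens P. x \<in> U} \<inter> {U \<in> scott_opens P. F \<subseteq> U} =
     {U \<in> scott_opens P. insert x F \<subseteq> U}" by auto
  ultimately show ?case by (simp add: openin_scott_topology)
qed

theorem corollary4p9:
  fixes P :: "'a::order set"
  assumes "omega_type_space (scott_topology P)"
  shows "sober_space (scott_topology (scott_opens P))"
  unfolding sober_space_def
proof (intro conjI allI impI)
  show "t0_space (scott_topology (scott_opens P))" by (rule t0_scott)
next
  fix C assume hC: "closedin (scott_topology (scott_opens P)) C \<and>
      irreducible_in (scott_topology (scott_opens P)) C"
  let ?L = "scott_opens P"
  have cl: "closedin (scott_topology ?L) C" and irr: "irreducible_in (scott_topology ?L) C"
    using hC by auto
  have CL: "C \<subseteq> ?L" using cl closedin_scott by blast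
  define W where "W = \<Union>C"
  have WL: "W \<in> ?L" unfolding W_def using union_L[OF CL] .
  have WP: "W \<subseteq> P" using WL by (auto simp: scott_opens_def scott_open_in_def)
  have Cne: "C \<noteq> {}" using irr unfolding irreducible_in_def by auto
  have emptyL: "{} \<in> ?L" by (simp add: scott_opens_def scott_open_in_def)
  have emptyC: "{} \<in> C"
  proof -
    obtain c where "c \<in> C" using Cne by auto
    then show ?thesis using closed_down[OF cl _ emptyL] by auto
  qed
  have fin: "\<exists>Y\<in>C. F \<subseteq> Y" if "finite F" "F \<subseteq> W" for F
    using that
  proof (induction F)
    case empty
    then show ?case using emptyC by auto
  next
    case (insert x F)
    then obtain Y1 where Y1: "Y1 \<in> C" "F \<subseteq> Y1" by auto
    obtain Y2 where Y2: "Y2 \<in> C" "x \<in> Y2" using insert.prems unfolding W_def by auto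
    have "C \<inter> {U \<in> ?L. F \<subseteq> U} \<inter> {U \<in> ?L. x \<in> U} \<noteq> {}"
      apply (rule irr_meet[OF irr])
      using phiF_open[OF insert.hyps(1)] phi_open Y1 Y2 CL
      by (auto simp: openin_scott_topology)
    then show ?case by auto
  qed
  have WC: "W \<in> C"
  proof (rule ccontr)
    assume nW: "W \<notin> C"
    have PnC: "P \<notin> C"
    proof
      assume "P \<in> C"
      then have "P \<subseteq> W" unfolding W_def by auto
      then have "W = P" using WP by auto
      then show False using nW \<open>P \<in> C\<close> by auto
    qed
    obtain B where BB: "(\<forall>b\<in>B. countable b) \<and> (\<forall>U. openin (scott_topology P) U \<longleftrightarrow>
        (\<exists>\<U>. U = \<Union>\<U> \<and> (\<forall>V\<in>\<U>. \<exists>F. finite F \<and> F \<subseteq> B \<and>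
            V = topspace (scott_topology P) \<inter> \<Inter>F)))"
      using assms[unfolded omega_type_space_def] by (rule exE)
    have Bc: "\<forall>b\<in>B. countable b" using BB by (rule conjunct1)
    have Bo: "\<forall>U. openin (scott_topology P) U \<longleftrightarrow>
        (\<exists>\<U>. U = \<Union>\<U> \<and> (\<forall>V\<in>\<U>. \<exists>F. finite F \<and> F \<subseteq> B \<and>
            V = topspace (scott_topology P) \<inter> \<Inter>F))" using BB by (rule conjunct2)
    have loc: "\<exists>V. V \<in> ?L \<and> countable V \<and> x \<in> V \<and> V \<subseteq> W" if xW: "x \<in> W" for x
    proof -
      obtain U where U: "U \<in> C" "x \<in> U" using xW unfolding W_def by auto
      have "openin (scott_topology P) U" using U CL by (auto simp: openin_scott_topology scott_opens_def)
      then have "\<exists>\<U>. U = \<Union>\<U> \<and> (\<forall>V\<in>\<U>. \<exists>F. finite F \<and> F \<subseteq> B \<and>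
            V = topspace (scott_topology P) \<inter> \<Inter>F)"
        by (rule iffD1[OF Bo[rule_format, of U]])
      then obtain \<U> where UU: "U = \<Union>\<U>" and
        UV: "\<forall>V\<in>\<U>. \<exists>F. finite F \<and> F \<subseteq> B \<and> V = topspace (scott_topology P) \<inter> \<Inter>F"
        by (elim exE conjE)
      have "x \<in> \<Union>\<U>" using U(2) UU by simp
      then obtain V where V: "V \<in> \<U>" "x \<in> V" by (rule UnionE)
      have "\<exists>F. finite F \<and> F \<subseteq> B \<and> V = topspace (scott_topology P) \<inter> \<Inter>F"
        using UV V(1) by (rule bspec)
      then obtain F where F: "finite F" "F \<subseteq> B" "V = topspace (scott_topology P) \<inter> \<Inter>F"
        by (elim exE conjE)
      have VU: "V \<subseteq> U" using UU V(1) by (simp add: Union_upper)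
      have UP: "U \<subseteq> P" using U CL by (auto simp: scott_opens_def scott_open_in_def)
      have "F \<noteq> {}"
      proof
        assume "F = {}"
        then have "V = P" using F by (simp add: topspace_scott)
        then have "U = P" using VU UP by auto
        then show False using PnC U by auto
      qed
      then obtain b where b: "b \<in> F" by auto
      have "V \<subseteq> b" using F(3) b by blast
      moreover have "countable b" using Bc F(2) b by blast
      ultimately have cV: "countable V" by (rule countable_subset)
      have "\<exists>\<U>. V = \<Union>\<U> \<and> (\<forall>V'\<in>\<U>. \<exists>F. finite F \<and> F \<subseteq> B \<and>
            V' = topspace (scott_topology P) \<inter> \<Inter>F)"
        by (rule exI[of _ "{V}"]) (use F in auto)
      then have "openin (scott_topology P) V" by (rule iffD2[OF Bo[rule_format, of V]])
      then have "V \<in> ?L" by (simp add: openin_scott_topology scott_opens_def)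
      moreover have "V \<subseteq> W" using VU U unfolding W_def by auto
      ultimately show ?thesis using cV V by auto
    qed
    define \<D> where "\<D> = {H \<in> ?L. H \<subseteq> W \<and> countable H}"
    have dirD: "directed_in ?L \<D>"
      unfolding directed_in_def
    proof (intro conjI ballI)
      show "\<D> \<noteq> {}" using emptyL unfolding \<D>_def by auto
      show "\<D> \<subseteq> ?L" unfolding \<D>_def by auto
    next
      fix x y assume "x \<in> \<D>" "y \<in> \<D>"
      then have "x \<union> y \<in> \<D>" unfolding \<D>_def using union_L[of "{x,y}" P] by auto
      then show "\<exists>z\<in>\<D>. x \<le> z \<and> y \<le> z" by auto
    qed
    have UD: "\<Union>\<D> = W"
    proof
      show "\<Union>\<D> \<subseteq> W" unfolding \<D>_def by auto
      show "W \<subseteq> \<Union>\<D>"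
      proof
        fix x assume "x \<in> W"
        then obtain V where "V \<in> ?L" "countable V" "x \<in> V" "V \<subseteq> W" using loc by blast
        then show "x \<in> \<Union>\<D>" unfolding \<D>_def by auto
      qed
    qed
    have lubD: "is_lub_in ?L \<D> W"
      using lub_L_intro[of \<D> P] UD unfolding \<D>_def by auto
    have O: "scott_open_in ?L (?L - C)" using cl closedin_scott by blast
    obtain G where G: "G \<in> \<D>" "G \<in> ?L - C"
      using scott_open_lub[OF O dirD lubD] nW WL by blast
    have GL: "G \<in> ?L" and GW: "G \<subseteq> W" and cG: "countable G" and GnC: "G \<notin> C"
      using G unfolding \<D>_def by auto
    have GP: "scott_open_in P G" using GL by (simp add: scott_opens_def)
    have Gne: "G \<noteq> {}" using GnC emptyC by auto
    define g where "g = from_nat_into G"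
    have rg: "range g = G" unfolding g_def using Gne cG by simp
    have "\<forall>m. \<exists>Y. Y \<in> C \<and> Y \<subseteq> G \<and> g ` {..m} \<subseteq> Y"
    proof
      fix m
      have "g ` {..m} \<subseteq> W" using rg GW by auto
      then obtain Y0 where Y0: "Y0 \<in> C" "g ` {..m} \<subseteq> Y0" using fin by blast
      have YL: "Y0 \<inter> G \<in> ?L" using int_L Y0 CL GL by blast
      have "Y0 \<inter> G \<in> C" using closed_down[OF cl Y0(1) YL] by auto
      then show "\<exists>Y. Y \<in> C \<and> Y \<subseteq> G \<and> g ` {..m} \<subseteq> Y" using Y0 rg by (intro exI[of _ "Y0 \<inter> G"]) auto
    qed
    from this[THEN choice] obtain Y where
      Yall: "\<forall>m. Y m \<in> C \<and> Y m \<subseteq> G \<and> g ` {..m} \<subseteq> Y m" by blast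
    have Y: "\<And>m. Y m \<in> C" "\<And>m. Y m \<subseteq> G" "\<And>m. g ` {..m} \<subseteq> Y m"
      using Yall by auto
    have YL: "\<And>m. scott_open_in P (Y m)" using Y(1) CL by (auto simp: scott_opens_def)
    define A where "A n = {x \<in> P. \<forall>m\<ge>n. x \<in> Y m}" for n
    have Aopen: "scott_open_in P (A n)" for n
    proof -
      have a1: "A n \<subseteq> P" by (auto simp: A_def)
      have a2: "\<forall>x\<in>A n. \<forall>y\<in>P. x \<le> y \<longrightarrow> y \<in> A n"
      proof (intro ballI impI)
        fix x y assume xy: "x \<in> A n" "y \<in> P" "x \<le> y"
        have "\<forall>m\<ge>n. y \<in> Y m"
        proof (intro allI impI)
          fix m assume "n \<le> m"
          then have "x \<in> Y m" using xy(1) by (simp add: A_def)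
          then show "y \<in> Y m" using scott_open_upper[OF YL _ xy(2,3)] by blast
        qed
        then show "y \<in> A n" using xy(2) by (simp add: A_def)
      qed
      have a3: "\<forall>D s. directed_in P D \<and> is_lub_in P D s \<and> s \<in> A n \<longrightarrow> D \<inter> A n \<noteq> {}"
      proof (intro allI impI)
        fix D s assume h: "directed_in P D \<and> is_lub_in P D s \<and> s \<in> A n"
        have dD: "directed_in P D" and lub: "is_lub_in P D s" and sA: "s \<in> A n" using h by auto
        have sY: "\<And>m. m \<ge> n \<Longrightarrow> s \<in> Y m" using sA by (auto simp: A_def)
        have "s \<in> G" using sY[of n] Y(2) by blast
        obtain d where dD': "d \<in> D" "d \<in> G" using scott_open_lub[OF GP dD lub \<open>s\<in>G\<close>] by blast
        obtain k where dk: "d = g k" using rg dD' by blast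
        have dY: "\<And>m. m \<ge> k \<Longrightarrow> d \<in> Y m" using Y(3) dk by auto
        have DP: "D \<subseteq> P" using dD unfolding directed_in_def by auto
        have step: "\<exists>e\<in>D. d \<le> e \<and> (\<forall>m. n \<le> m \<and> m < n + j \<longrightarrow> e \<in> Y m)" for j
        proof (induction j)
          case 0
          show ?case using dD' by auto
        next
          case (Suc j)
          then obtain e where e: "e \<in> D" "d \<le> e" "\<forall>m. n \<le> m \<and> m < n + j \<longrightarrow> e \<in> Y m"
            by blast
          obtain d' where d': "d' \<in> D" "d' \<in> Y (n+j)"
            using scott_open_lub[OF YL dD lub sY[of "n+j"]] by auto
          obtain z where z: "z \<in> D" "e \<le> z" "d' \<le> z"
            using dD e(1) d'(1) unfolding directed_in_def by blast
          have zP: "z \<in> P" using z DP by auto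
          have "\<forall>m. n \<le> m \<and> m < n + Suc j \<longrightarrow> z \<in> Y m"
          proof (intro allI impI)
            fix m assume m: "n \<le> m \<and> m < n + Suc j"
            show "z \<in> Y m"
            proof (cases "m < n + j")
              case True
              then have "e \<in> Y m" using e m by auto
              then show ?thesis using scott_open_upper[OF YL _ zP z(2)] by blast
            next
              case False
              then have "m = n + j" using m by auto
              then show ?thesis using scott_open_upper[OF YL d'(2) zP z(3)] by simp
            qed
          qed
          then show ?case using z e(2) order_trans by blast
        qed
        obtain e where e: "e \<in> D" "d \<le> e" "\<forall>m. n \<le> m \<and> m < n + k \<longrightarrow> e \<in> Y m"
          using step[of k] by blast
        have eP: "e \<in> P" using e DP by auto
        have "\<forall>m\<ge>n. e \<in> Y m"
        proof (intro allI impI)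
          fix m assume "n \<le> m"
          show "e \<in> Y m"
          proof (cases "m < n + k")
            case True
            then show ?thesis using e \<open>n \<le> m\<close> by auto
          next
            case False
            then have "k \<le> m" by auto
            then have "d \<in> Y m" by (rule dY)
            then show ?thesis using scott_open_upper[OF YL _ eP e(2)] by blast
          qed
        qed
        then show "D \<inter> A n \<noteq> {}" using e(1) eP by (auto simp: A_def)
      qed
      show ?thesis unfolding scott_open_in_def by (rule conjI[OF a1 conjI[OF a2 a3]])
    qed
    have AL: "A n \<in> ?L" for n using Aopen by (simp add: scott_opens_def)
    have AC: "A n \<in> C" for n
    proof -
      have "A n \<subseteq> Y n" by (auto simp: A_def)
      then show ?thesis using closed_down[OF cl Y(1)[of n] AL] by auto
    qed
    have Amono: "A i \<subseteq> A j" if "i \<le> j" for i j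
      using that by (auto simp: A_def)
    have dirA: "directed_in ?L (range A)"
      unfolding directed_in_def
    proof (intro conjI ballI)
      show "range A \<noteq> {}" by auto
      show "range A \<subseteq> ?L" using AL by auto
    next
      fix x y assume "x \<in> range A" "y \<in> range A"
      then obtain i j where "x = A i" "y = A j" by auto
      then show "\<exists>z\<in>range A. x \<le> z \<and> y \<le> z"
        using Amono[of i "max i j"] Amono[of j "max i j"] by auto
    qed
    have UA: "\<Union>(range A) = G"
    proof
      show "\<Union>(range A) \<subseteq> G" using Y(2) by (auto simp: A_def)
      show "G \<subseteq> \<Union>(range A)"
      proof
        fix x assume "x \<in> G"
        then obtain k where xk: "x = g k" using rg by blast
        have "x \<in> P" using \<open>x \<in> G\<close> GP scott_open_sub by blast
        moreover have "\<forall>m\<ge>k. x \<in> Y m" using Y(3) xk by auto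
        ultimately have "x \<in> A k" by (auto simp: A_def)
        then show "x \<in> \<Union>(range A)" by auto
      qed
    qed
    have "is_lub_in ?L (range A) G"
      using lub_L_intro[of "range A" P] UA AL by auto
    moreover have "range A \<subseteq> C" using AC by auto
    ultimately have "G \<in> C" using closed_lub[OF cl dirA] by blast
    then show False using GnC by auto
  qed
  have "C = {z \<in> ?L. z \<le> W}"
  proof
    show "C \<subseteq> {z \<in> ?L. z \<le> W}" using CL unfolding W_def by auto
    show "{z \<in> ?L. z \<le> W} \<subseteq> C" using closed_down[OF cl WC] by auto
  qed
  then have "C = scott_topology ?L closure_of {W}" using closure_scott[OF WL] by simp
  moreover have "W \<in> topspace (scott_topology ?L)" using WL by (simp add: topspace_scott)
  ultimately show "\<exists>x\<in>topspace (scott_topology ?L). C = scott_topology ?L closure_of {x}"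
    by (rule bexI)
qed

end
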